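(* Let $r=r(n)<n/2$ with $r/n^{1/2}\to\infty$, and let $m=m(n)$ be integers with $2\log_2 n\le m$ and $m=o(e^{r^2/n})$. Then $\Pr(\mathcal B_m)=o(1)$ as $n\to\infty$, where $\mathcal B_m$ is the event that at least $m$ edges are chosen and $\bigcap_{j=1}^m e_j\neq\emptyset$.
   Context: Random intersecting process: Let $[n]=\{1,\dots,n\}$ and $\binom{[n]}{r}$ the family of $r$-subsets of $[n]$. Choose $e_1$ uniformly at random from $\binom{[n]}{r}$. Given $\mathcal F_i=\{e_1,\dots,e_i\}$, let $\mathcal A(\mathcal F_i)=\{e\in\binom{[n]}{r}: e\notin\mathcal F_i,\ e\cap e_j\neq\emptyset \text{ for all } 1\le j\le i\}$, and choose $e_{i+1}$ uniformly at random from $\mathcal A(\mathcal F_i)$. The process halts when $\mathcal A(\mathcal F_i)=\emptyset$. *)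

theory Defs
  imports "HOL-Probability.Probability" "HOL-Library.Landau_Symbols"
begin

definition admissible :: "nat \<Rightarrow> nat \<Rightarrow> nat set list \<Rightarrow> nat set set" where
  "admissible n r F = {e. e \<subseteq> {1..n} \<and> card e = r \<and> e \<notin> set F \<and> (\<forall>f\<in>set F. e \<inter> f \<noteq> {})}"

text \<open>Distribution of the list of the first k edges of the random intersecting process
  (shorter than k if the process halted before step k).\<close>
fun intersecting_process :: "nat \<Rightarrow> nat \<Rightarrow> nat \<Rightarrow> nat set list pmf" where
  "intersecting_process n r 0 = return_pmf []"
| "intersecting_process n r (Suc k) =
     bind_pmf (intersecting_process n r k)
       (\<lambda>F. if admissible n r F = {} then return_pmf F
            else map_pmf (\<lambda>e. F @ [e]) (pmf_of_set (admissible n r F)))"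

definition prob_B :: "nat \<Rightarrow> nat \<Rightarrow> nat \<Rightarrow> real" where
  "prob_B n r m = measure_pmf.prob (intersecting_process n r m)
      {F. length F = m \<and> (\<Inter>e\<in>set F. e) \<noteq> {}}"

end

theory Submission
  imports Defs
begin

lemma count_bound:
  fixes n r k x :: nat and F :: "nat set list"
  assumes x: "x \<in> {1..n}" and r1: "1 \<le> r" and rn: "2*r < n"
    and F: "\<forall>e\<in>set F. e \<subseteq> {1..n} \<and> card e = r \<and> x \<in> e" and len: "length F = k"
    and H: "real k * real ((n-r) choose r) \<le> real ((n-1) choose r) / 2"
    and ne: "admissible n r F \<noteq> {}"
  shows "real (card (admissible n r F \<inter> {e. x \<in> e})) / real (card (admissible n r F)) \<le> 2/3"
proof -
  define U where "U = {1..n}"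
  define A where "A = admissible n r F"
  define X where "X = {e::nat set. x \<in> e}"
  define C where "C = (n-1) choose r"
  have finU: "finite U" by (simp add: U_def)
  have cU: "card U = n" by (simp add: U_def)
  have finA: "finite A" unfolding A_def admissible_def
    by (rule finite_subset[of _ "Pow {1..n}"]) auto
  have cA: "card A = card (A \<inter> X) + card (A - X)"
    using finA by (metis card_Int_Diff)
  define S1 where "S1 = {e. e \<subseteq> U \<and> card e = r \<and> x \<in> e}"
  define Sa where "Sa = {e. e \<subseteq> U \<and> card e = r}"
  define S0 where "S0 = {e. e \<subseteq> U - {x} \<and> card e = r}"
  have S1eq: "S1 = Sa - S0" unfolding S1_def Sa_def S0_def by auto
  have finSa: "finite Sa" unfolding Sa_def using finU by auto
  have "S0 \<subseteq> Sa" unfolding S0_def Sa_def by auto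
  have cSa: "card Sa = n choose r" unfolding Sa_def using n_subsets[OF finU] cU by simp
  have cU1: "card (U - {x}) = n - 1" using x cU finU by (simp add: U_def)
  have cS0: "card S0 = (n-1) choose r" unfolding S0_def using n_subsets[of "U - {x}" r] finU cU1 by simp
  have n1: "n = Suc (n-1)" using rn by simp
  have r1': "r = Suc (r-1)" using r1 by simp
  have pascal: "n choose r = ((n-1) choose (r-1)) + ((n-1) choose r)"
    using binomial_Suc_Suc[of "n-1" "r-1"] n1 r1' by simp
  have cS1: "card S1 = (n-1) choose (r-1)"
    using S1eq card_Diff_subset[OF finite_subset[OF \<open>S0 \<subseteq> Sa\<close> finSa] \<open>S0 \<subseteq> Sa\<close>] cSa cS0 pascal by simp
  have lt: "r - 1 < (n-1) div 2" using rn r1 by linarith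
  have cS1C: "card S1 \<le> C" unfolding C_def cS1
    using binomial_less_binomial_Suc[OF lt] r1' by simp
  have "A \<inter> X \<subseteq> S1" unfolding A_def X_def S1_def U_def admissible_def by auto
  hence a: "card (A \<inter> X) \<le> C"
    using cS1C card_mono[of S1] finSa S1eq by (meson finite_Diff le_trans)
  define S2 where "S2 = {e. e \<subseteq> U - {x} \<and> card e = r \<and> (\<forall>f\<in>set F. e \<inter> f \<noteq> {})}"
  define D where "D = (\<lambda>f. {e. e \<subseteq> U - f \<and> card e = r})"
  have "S2 \<subseteq> A - X" unfolding S2_def A_def X_def admissible_def U_def using F by auto
  hence b2: "card S2 \<le> card (A - X)" using finA by (simp add: card_mono)
  have "S0 - (\<Union>f\<in>set F. D f) \<subseteq> S2"
    unfolding S0_def S2_def D_def using F unfolding U_def by blast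
  hence b3: "card (S0 - (\<Union>f\<in>set F. D f)) \<le> card S2"
    by (rule card_mono[rotated]) (simp add: S2_def U_def)
  have finD: "\<And>f. finite (D f)" unfolding D_def using finU by auto
  have cD: "\<And>f. f \<in> set F \<Longrightarrow> card (D f) = (n-r) choose r"
  proof -
    fix f assume "f \<in> set F"
    hence "f \<subseteq> U" "card f = r" using F U_def by auto
    hence "card (U - f) = n - r" using cU finU by (simp add: card_Diff_subset finite_subset)
    thus "card (D f) = (n-r) choose r" unfolding D_def using n_subsets[of "U - f" r] finU by simp
  qed
  have "card (\<Union>f\<in>set F. D f) \<le> (\<Sum>f\<in>set F. card (D f))" by (rule card_UN_le) simp
  also have "\<dots> = card (set F) * ((n-r) choose r)" using cD by simp
  also have "\<dots> \<le> k * ((n-r) choose r)" using card_length[of F] len by simp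
  finally have cUD: "card (\<Union>f\<in>set F. D f) \<le> k * ((n-r) choose r)" .
  have "card S0 - card (\<Union>f\<in>set F. D f) \<le> card (S0 - (\<Union>f\<in>set F. D f))"
    by (rule diff_card_le_card_Diff) (simp add: finD)
  hence "real C - real (k * ((n-r) choose r)) \<le> real (card (A - X))"
    using b2 b3 cUD cS0 unfolding C_def by linarith
  hence b: "real C / 2 \<le> real (card (A - X))" using H unfolding C_def by simp
  have pos: "card A > 0" using ne finA unfolding A_def by (simp add: card_gt_0_iff)
  have "real (card (A \<inter> X)) \<le> 2/3 * real (card A)"
    using a b cA by simp
  thus ?thesis using pos unfolding A_def X_def by (simp add: divide_simps)
qed

definition step :: "nat \<Rightarrow> nat \<Rightarrow> nat set list \<Rightarrow> nat set list pmf" where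
  "step n r F = (if admissible n r F = {} then return_pmf F
            else map_pmf (\<lambda>e. F @ [e]) (pmf_of_set (admissible n r F)))"

lemma process_Suc: "intersecting_process n r (Suc k) = bind_pmf (intersecting_process n r k) (step n r)"
  by (simp add: step_def[abs_def])

lemma finite_adm: "finite (admissible n r F)"
  unfolding admissible_def by (rule finite_subset[of _ "Pow {1..n}"]) auto

lemma supp_process:
  "F \<in> set_pmf (intersecting_process n r k) \<Longrightarrow> length F \<le> k \<and> (\<forall>e\<in>set F. e \<subseteq> {1..n} \<and> card e = r)"
proof (induction k arbitrary: F)
  case 0
  then show ?case by simp
next
  case (Suc k)
  obtain G where G: "G \<in> set_pmf (intersecting_process n r k)" "F \<in> set_pmf (step n r G)"
    using Suc.prems unfolding process_Suc by auto
  show ?case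
  proof (cases "admissible n r G = {}")
    case True
    then show ?thesis using G Suc.IH[of G] by (simp add: step_def)
  next
    case False
    then obtain e where "F = G @ [e]" "e \<in> admissible n r G"
      using G(2) by (auto simp: step_def set_pmf_of_set finite_adm)
    then show ?thesis using Suc.IH[OF G(1)] by (auto simp: admissible_def)
  qed
qed

definition EvX :: "nat \<Rightarrow> nat \<Rightarrow> nat set list set" where
  "EvX x k = {F. length F = k \<and> (\<forall>e\<in>set F. x \<in> e)}"

lemma step_bound:
  fixes n r k x :: nat and F :: "nat set list"
  assumes x: "x \<in> {1..n}" and r1: "1 \<le> r" and rn: "2*r < n"
    and F: "F \<in> set_pmf (intersecting_process n r k)"
    and H: "real k * real ((n-r) choose r) \<le> real ((n-1) choose r) / 2"
  shows "measure_pmf.prob (step n r F) (EvX x (Suc k)) \<le> 2/3 * indicator (EvX x k) F"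
proof (cases "F \<in> EvX x k")
  case False
  have "set_pmf (step n r F) \<inter> EvX x (Suc k) = {}"
    using False supp_process[OF F]
    by (auto simp: step_def set_pmf_of_set finite_adm EvX_def split: if_splits)
  hence "measure_pmf.prob (step n r F) (EvX x (Suc k)) = 0"
    using measure_pmf_zero_iff by blast
  then show ?thesis by simp
next
  case True
  show ?thesis
  proof (cases "admissible n r F = {}")
    case True
    then show ?thesis using \<open>F \<in> EvX x k\<close> by (simp add: step_def EvX_def)
  next
    case False
    have eq: "(\<lambda>e. F @ [e]) -` EvX x (Suc k) = {e. x \<in> e}"
      using \<open>F \<in> EvX x k\<close> by (auto simp: EvX_def)
    have "measure_pmf.prob (step n r F) (EvX x (Suc k))
        = real (card (admissible n r F \<inter> {e. x \<in> e})) / real (card (admissible n r F))"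
      using False by (simp add: step_def eq measure_pmf_of_set finite_adm)
    also have "\<dots> \<le> 2/3"
      apply (rule count_bound[OF x r1 rn _ _ H False])
      using supp_process[OF F] \<open>F \<in> EvX x k\<close> by (auto simp: EvX_def)
    finally show ?thesis using True by simp
  qed
qed

lemma EvX_bound:
  fixes n r m x :: nat
  assumes x: "x \<in> {1..n}" and r1: "1 \<le> r" and rn: "2*r < n"
    and H: "real m * real ((n-r) choose r) \<le> real ((n-1) choose r) / 2"
  shows "1 \<le> k \<Longrightarrow> k \<le> m \<Longrightarrow> measure_pmf.prob (intersecting_process n r k) (EvX x k) \<le> (2/3)^(k-1)"
proof (induction k)
  case 0
  then show ?case by simp
next
  case (Suc k)
  show ?case
  proof (cases "k = 0")
    case True
    then show ?thesis by simp
  next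
    case False
    have Hk: "real k * real ((n-r) choose r) \<le> real ((n-1) choose r) / 2"
    proof -
      have "real k \<le> real m" using Suc.prems by simp
      hence "real k * real ((n-r) choose r) \<le> real m * real ((n-r) choose r)"
        by (rule mult_right_mono) simp
      thus ?thesis using H by linarith
    qed
    let ?P = "intersecting_process n r k"
    have "emeasure (measure_pmf (intersecting_process n r (Suc k))) (EvX x (Suc k))
        = (\<integral>\<^sup>+F. emeasure (measure_pmf (step n r F)) (EvX x (Suc k)) \<partial>measure_pmf ?P)"
      unfolding process_Suc by simp
    also have "\<dots> \<le> (\<integral>\<^sup>+F. ennreal (2/3) * indicator (EvX x k) F \<partial>measure_pmf ?P)"
    proof (rule nn_integral_mono_AE, rule AE_pmfI)
      fix F assume F: "F \<in> set_pmf ?P"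
      have "emeasure (measure_pmf (step n r F)) (EvX x (Suc k)) = ennreal (measure_pmf.prob (step n r F) (EvX x (Suc k)))"
        by (simp add: measure_pmf.emeasure_eq_measure)
      also have "\<dots> \<le> ennreal (2/3 * indicator (EvX x k) F)"
        using step_bound[OF x r1 rn F Hk] by (simp add: ennreal_leI)
      also have "\<dots> = ennreal (2/3) * indicator (EvX x k) F"
        by (simp add: indicator_def)
      finally show "emeasure (measure_pmf (step n r F)) (EvX x (Suc k)) \<le> ennreal (2/3) * indicator (EvX x k) F" .
    qed
    also have "\<dots> = ennreal (2/3) * emeasure (measure_pmf ?P) (EvX x k)"
      by (simp add: nn_integral_cmult_indicator)
    also have "\<dots> = ennreal (2/3) * ennreal (measure_pmf.prob ?P (EvX x k))"
      by (simp add: measure_pmf.emeasure_eq_measure)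
    also have "\<dots> = ennreal (2/3 * measure_pmf.prob ?P (EvX x k))"
      by (rule ennreal_mult[symmetric]) auto
    also have "\<dots> \<le> ennreal (2/3 * (2/3)^(k-1))"
      using Suc.IH Suc.prems False by (intro ennreal_leI) simp
    finally have "measure_pmf.prob (intersecting_process n r (Suc k)) (EvX x (Suc k)) \<le> 2/3 * (2/3)^(k-1)"
      by (simp add: measure_pmf.emeasure_eq_measure)
    also have "\<dots> = (2/3)^(Suc k - 1)" using False by (cases k) auto
    finally show ?thesis .
  qed
qed

lemma probB_bound:
  fixes n r m :: nat
  assumes r1: "1 \<le> r" and rn: "2*r < n" and m1: "1 \<le> m"
    and H: "real m * real ((n-r) choose r) \<le> real ((n-1) choose r) / 2"
  shows "prob_B n r m \<le> real n * (2/3)^(m-1)"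
proof -
  let ?P = "intersecting_process n r m"
  let ?B = "{F. length F = m \<and> (\<Inter>e\<in>set F. e) \<noteq> {}}"
  have sub: "?B \<inter> set_pmf ?P \<subseteq> (\<Union>x\<in>{1..n}. EvX x m)"
  proof
    fix F assume F: "F \<in> ?B \<inter> set_pmf ?P"
    then obtain x where xF: "x \<in> (\<Inter>e\<in>set F. e)" by auto
    have "F \<noteq> []" using F m1 by auto
    then obtain e where e: "e \<in> set F" by (cases F) auto
    have "e \<subseteq> {1..n}" using e supp_process[of F n r m] F by blast
    moreover have "x \<in> e" using xF e by blast
    ultimately have "x \<in> {1..n}" by blast
    moreover have "F \<in> EvX x m" using F xF by (auto simp: EvX_def)
    ultimately show "F \<in> (\<Union>x\<in>{1..n}. EvX x m)" by blast
  qed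
  have "prob_B n r m = measure_pmf.prob ?P (?B \<inter> set_pmf ?P)"
    unfolding prob_B_def by (simp add: measure_Int_set_pmf)
  also have "\<dots> \<le> measure_pmf.prob ?P (\<Union>x\<in>{1..n}. EvX x m)"
    by (rule measure_pmf.finite_measure_mono[OF sub]) simp
  also have "\<dots> \<le> (\<Sum>x\<in>{1..n}. measure_pmf.prob ?P (EvX x m))"
    by (rule measure_pmf.finite_measure_subadditive_finite) auto
  also have "\<dots> \<le> (\<Sum>x\<in>{1..n}. (2/3::real)^(m-1))"
    by (rule sum_mono, rule EvX_bound[OF _ r1 rn H m1]) auto
  also have "\<dots> = real n * (2/3)^(m-1)" by simp
  finally show ?thesis .
qed
lemma binom_ratio:
  fixes n r :: nat
  assumes r1: "1 \<le> r" and rn: "2*r < n"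
  shows "real ((n-r) choose r) \<le> 2 * exp (- ((real r)^2 / real n)) * real ((n-1) choose r)"
proof -
  define E where "E = exp (- (real r - 1) / real n)"
  have npos: "real n > 0" using rn by simp
  have f1: "fact r * real ((n-r) choose r) = (\<Prod>i = 0..<r. real (n-r) - real i)"
    by (simp add: binomial_gbinomial gbinomial_mult_fact)
  have f2: "fact r * real ((n-1) choose r) = (\<Prod>i = 0..<r. real (n-1) - real i)"
    by (simp add: binomial_gbinomial gbinomial_mult_fact)
  have fac: "\<And>i. i \<in> {0..<r} \<Longrightarrow> 0 \<le> real (n-r) - real i \<and> real (n-r) - real i \<le> E * (real (n-1) - real i)"
  proof -
    fix i assume "i \<in> {0..<r}"
    hence i: "i < r" by simp
    have a: "real (n-r) = real n - real r" "real (n-1) = real n - 1" using rn by auto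
    have e: "1 - (real r - 1) / real n \<le> E"
    proof -
      have eq: "1 - (real r - 1) / real n = 1 + (- (real r - 1) / real n)" by (simp add: diff_divide_distrib)
      show ?thesis unfolding E_def eq by (rule exp_ge_add_one_self)
    qed
    have g0: "0 \<le> real n - 1 - real i" using i rn by linarith
    have "real n - real r - real i \<le> (1 - (real r - 1) / real n) * (real n - 1 - real i)"
    proof -
      have "(real r - 1) * (real n - 1 - real i) / real n \<le> real r - 1"
        using npos r1 g0 by (simp add: divide_simps mult_left_mono)
      moreover have "(1 - (real r - 1) / real n) * (real n - 1 - real i)
          = (real n - 1 - real i) - (real r - 1) * (real n - 1 - real i) / real n"
        by (simp add: left_diff_distrib)
      ultimately show ?thesis by (smt (verit))
    qed
    also have "\<dots> \<le> E * (real n - 1 - real i)" using e g0 by (rule mult_right_mono)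
    finally show "0 \<le> real (n-r) - real i \<and> real (n-r) - real i \<le> E * (real (n-1) - real i)"
      using a i rn by auto
  qed
  have "fact r * real ((n-r) choose r) \<le> (\<Prod>i = 0..<r. E * (real (n-1) - real i))"
    unfolding f1 by (rule prod_mono) (use fac in blast)
  also have "\<dots> = E ^ r * (fact r * real ((n-1) choose r))"
    by (simp only: prod.distrib f2[symmetric]) simp
  finally have "real ((n-r) choose r) \<le> E ^ r * real ((n-1) choose r)"
    by (simp add: mult.left_commute)
  moreover have "E ^ r \<le> 2 * exp (- ((real r)^2 / real n))"
  proof -
    have "E ^ r = exp (real r * (- (real r - 1) / real n))"
      unfolding E_def by (rule exp_of_nat_mult[symmetric])
    also have "real r * (- (real r - 1) / real n) = - ((real r)^2 / real n) + real r / real n"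
      using npos by (simp add: field_simps power2_eq_square)
    also have "exp \<dots> = exp (- ((real r)^2 / real n)) * exp (real r / real n)"
      by (rule exp_add)
    also have "\<dots> \<le> exp (- ((real r)^2 / real n)) * 2"
    proof (rule mult_left_mono)
      have "real r / real n \<le> 1/2" using rn npos by (simp add: divide_simps)
      hence "exp (real r / real n) \<le> exp (1/2)" by simp
      thus "exp (real r / real n) \<le> 2" using exp_half_le2 by linarith
    qed simp
    finally show ?thesis by simp
  qed
  ultimately show ?thesis
    by (smt (verit) mult_right_mono of_nat_0_le_iff)
qed

lemma decay_limit:
  "(\<lambda>n. 3/2 * real n powr (1 + 2 * ln (2/3) / ln 2)) \<longlonglongrightarrow> 0"
proof -
  have l8: "ln (8::real) = 3 * ln 2" using ln_realpow[of "2::real" 3] by simp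
  have l9: "ln (9::real) = 2 * ln 3" using ln_realpow[of "3::real" 2] by simp
  have d1: "ln (8/9::real) = ln 8 - ln 9" by (rule ln_divide_pos) auto
  have d2: "ln (2/3::real) = ln 2 - ln 3" by (rule ln_divide_pos) auto
  have "ln 2 + 2 * ln (2/3::real) = ln (8/9)"
    unfolding d1 d2 l8 l9 by simp
  also have "\<dots> < 0" by simp
  finally have neg: "ln 2 + 2 * ln (2/3::real) < 0" .
  have lp: "0 < ln (2::real)" by simp
  have eq: "1 + 2 * ln (2/3) / ln 2 = (ln 2 + 2 * ln (2/3::real)) / ln 2"
    using lp by (simp add: add_divide_distrib)
  have "1 + 2 * ln (2/3) / ln 2 < (0::real)"
    unfolding eq by (rule divide_neg_pos[OF neg lp])
  hence "(\<lambda>n. real n powr (1 + 2 * ln (2/3) / ln 2)) \<longlonglongrightarrow> 0"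
    by (intro tendsto_neg_powr filterlim_real_sequentially)
  thus ?thesis by (intro tendsto_mult_right_zero)
qed

lemma decay_bound:
  fixes n m :: nat
  assumes n2: "2 \<le> n" and m: "2 * log 2 (real n) \<le> real m"
  shows "real n * (2/3)^(m-1) \<le> 3/2 * real n powr (1 + 2 * ln (2/3) / ln 2)"
proof -
  have m1: "1 \<le> m"
  proof -
    have "1 \<le> log 2 (real n)" using n2 by simp
    thus ?thesis using m by linarith
  qed
  have "(2/3::real)^(m-1) = 3/2 * (2/3)^m" using m1 by (cases m) auto
  also have "(2/3::real)^m = (2/3) powr real m" by (simp add: powr_realpow)
  also have "\<dots> \<le> (2/3) powr (2 * log 2 (real n))"
    using m by (intro powr_mono') auto
  also have "\<dots> = exp (2 * log 2 (real n) * ln (2/3))" by (simp add: powr_def)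
  also have "\<dots> = real n powr (2 * ln (2/3) / ln 2)"
    using n2 by (simp add: powr_def log_def)
  finally have "real n * (2/3)^(m-1) \<le> real n * (3/2 * real n powr (2 * ln (2/3) / ln 2))"
    by (intro mult_left_mono) auto
  also have "\<dots> = 3/2 * real n powr (1 + 2 * ln (2/3) / ln 2)"
    using n2 by (simp add: powr_add)
  finally show ?thesis .
qed

theorem lemma8:
  fixes r m :: "nat \<Rightarrow> nat"
  assumes "\<forall>\<^sub>F n in sequentially. real (r n) < real n / 2"
    and "filterlim (\<lambda>n. real (r n) / sqrt (real n)) at_top sequentially"
    and "\<forall>\<^sub>F n in sequentially. 2 * log 2 (real n) \<le> real (m n)"
    and "(\<lambda>n. real (m n)) \<in> o(\<lambda>n. exp ((real (r n))\<^sup>2 / real n))"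
  shows "(\<lambda>n. prob_B n (r n) (m n)) \<longlonglongrightarrow> 0"
proof -
  have ev2: "\<forall>\<^sub>F n in sequentially. 1 \<le> real (r n) / sqrt (real n)"
    using assms(2) unfolding filterlim_at_top by blast
  have ev4: "\<forall>\<^sub>F n in sequentially. norm (real (m n)) \<le> 1/4 * norm (exp ((real (r n))\<^sup>2 / real n))"
    using landau_o.smallD[OF assms(4), of "1/4"] by simp
  have ev5: "\<forall>\<^sub>F n in sequentially. 2 \<le> n" by (rule eventually_ge_at_top)
  have evB: "\<forall>\<^sub>F n in sequentially. prob_B n (r n) (m n) \<le> 3/2 * real n powr (1 + 2 * ln (2/3) / ln 2)"
    using assms(1) ev2 assms(3) ev4 ev5
  proof eventually_elim
    case (elim n)
    have rn: "2 * r n < n" using elim(1) by linarith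
    have "0 < sqrt (real n)" using elim(5) by simp
    hence "real (r n) \<ge> sqrt (real n)" using elim(2) by (simp add: divide_simps)
    hence r1: "1 \<le> r n" using \<open>0 < sqrt (real n)\<close> by (cases "r n") auto
    have "1 \<le> log 2 (real n)" using elim(5) by simp
    hence m1: "1 \<le> m n" using elim(3) by linarith
    define C where "C = real ((n - 1) choose r n)"
    define X where "X = exp ((real (r n))\<^sup>2 / real n)"
    have mX: "real (m n) \<le> 1/4 * X" using elim(4) unfolding X_def by simp
    have br: "real ((n - r n) choose r n) \<le> 2 * exp (- ((real (r n))^2 / real n)) * C"
      unfolding C_def by (rule binom_ratio[OF r1 rn])
    have XX: "X * exp (- ((real (r n))^2 / real n)) = 1"
      unfolding X_def by (simp add: exp_minus[symmetric] exp_add[symmetric])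
    have C0: "0 \<le> C" unfolding C_def by simp
    have "real (m n) * real ((n - r n) choose r n) \<le> (1/4 * X) * (2 * exp (- ((real (r n))^2 / real n)) * C)"
      using mX br by (intro mult_mono) auto
    also have "\<dots> = C / 2 * (X * exp (- ((real (r n))^2 / real n)))" by (simp add: field_simps)
    also have "\<dots> = C / 2" using XX by simp
    finally have H: "real (m n) * real ((n - r n) choose r n) \<le> C / 2" .
    have "prob_B n (r n) (m n) \<le> real n * (2/3)^(m n - 1)"
      by (rule probB_bound[OF r1 rn m1 H[unfolded C_def]])
    also have "\<dots> \<le> 3/2 * real n powr (1 + 2 * ln (2/3) / ln 2)"
      by (rule decay_bound[OF elim(5) elim(3)])
    finally show ?case .
  qed
  have ev0: "\<forall>\<^sub>F n in sequentially. 0 \<le> prob_B n (r n) (m n)"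
    by (simp add: prob_B_def)
  show ?thesis
    by (rule tendsto_sandwich[OF ev0 evB tendsto_const decay_limit])
qed

end
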